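(* Let $\Lambda=(\mathcal{L}\subset\mathbb{R}^s,\mathbb{R}^n)$ be a generic cut-and-project scheme, where $\mathcal{L}$ has associated matrix $L\in\mathbb{R}^{s\times s}$. Let $W_A\in\mathbb{R}^{n\times n}$, $W_B\in\mathbb{R}^{(s-n)\times(s-n)}$ and $Q\in\mathbb{Q}^{s\times s}$ be non-singular matrices. Define $\widetilde L=\begin{pmatrix}W_A&O\\O&W_B\end{pmatrix}LQ^{-1}$ and $\widetilde{\mathcal{L}}=\{\widetilde L\mathbf{r}:\mathbf{r}\in\mathbb{Z}^s\}$. Then $\widetilde\Lambda=(\widetilde{\mathcal{L}}\subset\mathbb{R}^s,\mathbb{R}^n)$ is also a generic cut-and-project scheme.
   Context: A lattice $\mathcal{L}\subset\mathbb{R}^s$ is $\{L\mathbf{r}:\mathbf{r}\in\mathbb{Z}^s\}$ for a non-singular $L\in\mathbb{R}^{s\times s}$ (an associated matrix). For $1\le n<s$ the scheme $(\mathcal{L}\subset\mathbb{R}^s,\mathbb{R}^n)$ has projections $\pi_\parallel(\mathbf{x})=(x_1,\dots,x_n)^\top$, $\pi_\perp(\mathbf{x})=(x_{n+1},\dots,x_s)^\top$; it is generic if $\pi_\parallel|_{\mathcal{L}}$ and $\pi_\perp|_{\mathcal{L}}$ are injective and $\pi_\perp(\mathcal{L})$ is dense in $\mathbb{R}^{s-n}$. *)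

theory Defs
  imports "HOL-Analysis.Analysis" "Jordan_Normal_Form.Gauss_Jordan_Elimination"
    "Jordan_Normal_Form.Determinant"
begin

definition int_vecs :: "nat \<Rightarrow> real vec set" where
  "int_vecs s = {r \<in> carrier_vec s. \<forall>i<s. r $ i \<in> \<int>}"

definition lattice_of :: "nat \<Rightarrow> real mat \<Rightarrow> real vec set" where
  "lattice_of s L = {L *\<^sub>v r | r. r \<in> int_vecs s}"

definition pi_par :: "nat \<Rightarrow> real vec \<Rightarrow> real vec" where
  "pi_par n x = vec_first x n"

definition pi_perp :: "nat \<Rightarrow> nat \<Rightarrow> real vec \<Rightarrow> real vec" where
  "pi_perp s n x = vec_last x (s - n)"

text \<open>Density of a subset of R^m (Euclidean topology; sup-norm balls).\<close>
definition dense_in_Rm :: "nat \<Rightarrow> real vec set \<Rightarrow> bool" where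
  "dense_in_Rm m S \<longleftrightarrow> (\<forall>y\<in>carrier_vec m. \<forall>e>0. \<exists>x\<in>S.
      x \<in> carrier_vec m \<and> (\<forall>i<m. \<bar>x $ i - y $ i\<bar> < e))"

definition generic_cps :: "nat \<Rightarrow> nat \<Rightarrow> real mat \<Rightarrow> bool" where
  "generic_cps s n L \<longleftrightarrow> 1 \<le> n \<and> n < s \<and> L \<in> carrier_mat s s \<and> det L \<noteq> 0 \<and>
     inj_on (pi_par n) (lattice_of s L) \<and>
     inj_on (pi_perp s n) (lattice_of s L) \<and>
     dense_in_Rm (s - n) (pi_perp s n ` lattice_of s L)"

end

theory Submission
  imports Defs
begin

lemma common_denom: "finite (A::rat set) \<Longrightarrow> \<exists>N::int. N > 0 \<and> (\<forall>x\<in>A. of_int N * x \<in> \<int>)"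
proof (induction A rule: finite_induct)
  case empty
  then show ?case by (intro exI[of _ 1]) auto
next
  case (insert x F)
  then obtain N where N: "N > 0" "\<forall>y\<in>F. of_int N * y \<in> \<int>" by auto
  obtain a b where ab: "quotient_of x = (a, b)" by force
  have b: "b > 0" using quotient_of_denom_pos[OF ab] .
  have xab: "x = of_int a / of_int b" using quotient_of_div[OF ab] .
  have bx: "of_int b * x = of_int a" using b xab by (simp add: field_simps)
  have "of_int (N * b) * x = of_int N * (of_int b * x)" by simp
  also have "\<dots> = of_int (N * a)" using bx by simp
  finally have "of_int (N * b) * x = of_int (N * a)" .
  hence 1: "of_int (N * b) * x \<in> \<int>" by (metis Ints_of_int)
  have 2: "of_int (N * b) * y \<in> \<int>" if "y \<in> F" for y
  proof -
    have "of_int (N * b) * y = of_int b * (of_int N * y)" by simp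
    thus ?thesis using N(2) that by (metis Ints_mult Ints_of_int)
  qed
  show ?case using 1 2 N b by (intro exI[of _ "N * b"]) auto
qed

lemma rat_mat_denom:
  fixes P :: "rat mat"
  shows "\<exists>N::int. N > 0 \<and> (\<forall>i<s. \<forall>j<s. real_of_int N * of_rat (P $$ (i,j)) \<in> \<int>)"
proof -
  have fin: "finite ((\<lambda>(i,j). P $$ (i,j)) ` ({..<s} \<times> {..<s}))" by auto
  from common_denom[OF fin] obtain N where N: "N > 0"
    "\<forall>x\<in>(\<lambda>(i,j). P $$ (i,j)) ` ({..<s} \<times> {..<s}). of_int N * x \<in> \<int>" by blast
  have "real_of_int N * of_rat (P $$ (i,j)) \<in> \<int>" if "i < s" "j < s" for i j
  proof -
    have "of_int N * P $$ (i,j) \<in> \<int>" using N(2) that by auto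
    then obtain m where m: "of_int N * P $$ (i,j) = of_int m" by (auto elim: Ints_cases)
    have "real_of_int N * of_rat (P $$ (i,j)) = of_rat (of_int N * P $$ (i,j))"
      by (simp add: of_rat_mult)
    also have "\<dots> = of_int m" using m by simp
    finally show ?thesis by simp
  qed
  thus ?thesis using N(1) by blast
qed

lemma int_mat_int_vec:
  fixes A :: "real mat"
  assumes A: "A \<in> carrier_mat s s" and Ai: "\<forall>i<s. \<forall>j<s. A $$ (i,j) \<in> \<int>"
    and r: "r \<in> int_vecs s"
  shows "A *\<^sub>v r \<in> int_vecs s"
proof -
  have rc: "r \<in> carrier_vec s" and ri: "\<forall>i<s. r $ i \<in> \<int>" using r unfolding int_vecs_def by auto
  have "(A *\<^sub>v r) $ i \<in> \<int>" if "i < s" for i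
  proof -
    have "(A *\<^sub>v r) $ i = (\<Sum>j\<in>{0..<s}. A $$ (i,j) * r $ j)"
      using A rc that by (simp add: scalar_prod_def)
    also have "\<dots> \<in> \<int>" using Ai ri that by (intro Ints_sum Ints_mult) auto
    finally show ?thesis .
  qed
  thus ?thesis using mult_mat_vec_carrier[OF A rc] unfolding int_vecs_def by auto
qed

lemma smult_mat_mult_vec':
  fixes A :: "'a::comm_ring mat"
  assumes "A \<in> carrier_mat nr nc" "v \<in> carrier_vec nc"
  shows "(c \<cdot>\<^sub>m A) *\<^sub>v v = c \<cdot>\<^sub>v (A *\<^sub>v v)"
  using assms by (intro eq_vecI) (auto simp: scalar_prod_def sum_distrib_left ac_simps)

lemma mat_left_cancel:
  fixes A :: "real mat"
  assumes A: "A \<in> carrier_mat m m" and d: "det A \<noteq> 0"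
    and a: "a \<in> carrier_vec m" and b: "b \<in> carrier_vec m" and e: "A *\<^sub>v a = A *\<^sub>v b"
  shows "a = b"
proof -
  have "A *\<^sub>v (a - b) = 0\<^sub>v m" using e A a b by (simp add: mult_minus_distrib_mat_vec)
  moreover have "a - b \<in> carrier_vec m" using a b by simp
  ultimately have ab: "a - b = 0\<^sub>v m" using det_0_iff_vec_prod_zero[OF A] d by blast
  show ?thesis
  proof (rule eq_vecI)
    fix i assume "i < dim_vec b"
    hence "(a - b) $ i = 0" using ab b by (metis carrier_vecD index_zero_vec(1))
    thus "a $ i = b $ i" using \<open>i < dim_vec b\<close> a b by simp
  qed (use a b in auto)
qed

lemma mat_inv_exists:
  fixes A :: "'a::field mat"
  assumes A: "A \<in> carrier_mat m m" and d: "det A \<noteq> 0"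
  shows "\<exists>B. mat_inverse A = Some B \<and> A * B = 1\<^sub>m m \<and> B * A = 1\<^sub>m m \<and> B \<in> carrier_mat m m"
proof -
  have "A \<in> Units (ring_mat TYPE('a) m m)" by (rule det_non_zero_imp_unit[OF A d])
  then obtain B where "mat_inverse A = Some B" using mat_inverse(1)[OF A, where b=m] by (cases "mat_inverse A") auto
  thus ?thesis using mat_inverse(2)[OF A] by auto
qed

lemma dense_image:
  fixes A :: "real mat"
  assumes A: "A \<in> carrier_mat m m" and d: "det A \<noteq> 0"
    and S: "dense_in_Rm m S" and Sc: "S \<subseteq> carrier_vec m"
  shows "dense_in_Rm m ((\<lambda>x. A *\<^sub>v x) ` S)"
  unfolding dense_in_Rm_def
proof (intro ballI allI impI)
  fix y :: "real vec" and e :: real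
  assume y: "y \<in> carrier_vec m" and e: "e > 0"
  obtain B where B: "A * B = 1\<^sub>m m" "B \<in> carrier_mat m m" using mat_inv_exists[OF A d] by auto
  define z where "z = B *\<^sub>v y"
  have zc: "z \<in> carrier_vec m" using B y z_def by auto
  have Az: "A *\<^sub>v z = y" unfolding z_def using assoc_mult_mat_vec[OF A B(2) y] B y by simp
  define K where "K = 1 + (\<Sum>i<m. \<Sum>j<m. \<bar>A $$ (i,j)\<bar>)"
  have Kpos: "K > 0" unfolding K_def by (smt (verit) sum_nonneg abs_ge_zero)
  from S[unfolded dense_in_Rm_def, rule_format, OF zc, of "e / K"] e Kpos
  obtain x where x: "x \<in> S" "x \<in> carrier_vec m" "\<forall>i<m. \<bar>x $ i - z $ i\<bar> < e / K"
    by auto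
  show "\<exists>x\<in>(\<lambda>x. A *\<^sub>v x) ` S. x \<in> carrier_vec m \<and> (\<forall>i<m. \<bar>x $ i - y $ i\<bar> < e)"
  proof (intro bexI conjI allI impI)
    show "A *\<^sub>v x \<in> carrier_vec m" using mult_mat_vec_carrier[OF A x(2)] .
    show "A *\<^sub>v x \<in> (\<lambda>x. A *\<^sub>v x) ` S" using x by auto
    fix i assume i: "i < m"
    have "(A *\<^sub>v x) $ i - y $ i = (\<Sum>j\<in>{0..<m}. A $$ (i,j) * (x $ j - z $ j))"
      using A x(2) zc i unfolding Az[symmetric]
      by (simp add: scalar_prod_def right_diff_distrib sum_subtractf)
    also have "\<bar>\<dots>\<bar> \<le> (\<Sum>j\<in>{0..<m}. \<bar>A $$ (i,j)\<bar> * (e / K))"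
    proof (rule order.trans[OF sum_abs], rule sum_mono)
      fix j assume "j \<in> {0..<m}"
      hence "\<bar>x $ j - z $ j\<bar> \<le> e / K" using x(3) by (simp add: less_imp_le)
      thus "\<bar>A $$ (i,j) * (x $ j - z $ j)\<bar> \<le> \<bar>A $$ (i,j)\<bar> * (e / K)"
        unfolding abs_mult by (rule mult_left_mono) simp
    qed
    also have "\<dots> = (\<Sum>j<m. \<bar>A $$ (i,j)\<bar>) * (e / K)"
      by (simp add: sum_distrib_right atLeast0LessThan del: times_divide_eq_right)
    also have "\<dots> \<le> (K - 1) * (e / K)"
    proof -
      have "(\<Sum>j<m. \<bar>A $$ (i,j)\<bar>) \<le> (\<Sum>i<m. \<Sum>j<m. \<bar>A $$ (i,j)\<bar>)"
        using i by (intro member_le_sum) (auto intro: sum_nonneg)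
      moreover have "0 \<le> e / K" using e Kpos by simp
      ultimately show ?thesis unfolding K_def by (intro mult_right_mono) auto
    qed
    also have "\<dots> < e" using Kpos e by (simp add: field_simps)
    finally show "\<bar>(A *\<^sub>v x) $ i - y $ i\<bar> < e" .
  qed
qed

lemma vf_app: "a \<in> carrier_vec n \<Longrightarrow> vec_first (a @\<^sub>v b) n = a"
  by (intro eq_vecI) (auto simp: vec_first_def)

lemma vl_app: "b \<in> carrier_vec k \<Longrightarrow> vec_last (a @\<^sub>v b) k = b"
  by (intro eq_vecI) (auto simp: vec_last_def)

lemma block_proj:
  fixes WA WB :: "real mat"
  assumes WA: "WA \<in> carrier_mat n n" and WB: "WB \<in> carrier_mat k k"
    and x: "x \<in> carrier_vec (n + k)"
  shows "vec_first (four_block_mat WA (0\<^sub>m n k) (0\<^sub>m k n) WB *\<^sub>v x) n = WA *\<^sub>v vec_first x n"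
    and "vec_last (four_block_mat WA (0\<^sub>m n k) (0\<^sub>m k n) WB *\<^sub>v x) k = WB *\<^sub>v vec_last x k"
proof -
  have e: "four_block_mat WA (0\<^sub>m n k) (0\<^sub>m k n) WB *\<^sub>v x
     = WA *\<^sub>v vec_first x n @\<^sub>v WB *\<^sub>v vec_last x k"
    using mult_mat_vec_split[OF WA WB vec_first_carrier vec_last_carrier]
      vec_first_last_append[OF x] by metis
  have c1: "WA *\<^sub>v vec_first x n \<in> carrier_vec n" using WA by simp
  have c2: "WB *\<^sub>v vec_last x k \<in> carrier_vec k" using WB by simp
  show "vec_first (four_block_mat WA (0\<^sub>m n k) (0\<^sub>m k n) WB *\<^sub>v x) n = WA *\<^sub>v vec_first x n"
    unfolding e by (rule vf_app[OF c1])
  show "vec_last (four_block_mat WA (0\<^sub>m n k) (0\<^sub>m k n) WB *\<^sub>v x) k = WB *\<^sub>v vec_last x k"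
    unfolding e by (rule vl_app[OF c2])
qed

lemma vec_first_smult: "vec_first (c \<cdot>\<^sub>v v) n = c \<cdot>\<^sub>v vec_first v n" if "n \<le> dim_vec v"
  using that by (intro eq_vecI) (auto simp: vec_first_def)

lemma vec_last_smult: "vec_last (c \<cdot>\<^sub>v v) n = c \<cdot>\<^sub>v vec_last v n" if "n \<le> dim_vec v"
  using that by (intro eq_vecI) (auto simp: vec_last_def)

lemma smult_vec_cancel:
  fixes a b :: "real vec"
  assumes "c \<noteq> 0" "c \<cdot>\<^sub>v a = c \<cdot>\<^sub>v b"
  shows "a = b"
proof -
  have "(1/c) \<cdot>\<^sub>v (c \<cdot>\<^sub>v a) = (1/c) \<cdot>\<^sub>v (c \<cdot>\<^sub>v b)" using assms by simp
  thus ?thesis using assms(1) by (simp add: smult_smult_assoc)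
qed

theorem lemma2:
  fixes s n :: nat and L WA WB :: "real mat" and Q :: "rat mat"
  assumes "generic_cps s n L"
    and "WA \<in> carrier_mat n n" and "det WA \<noteq> 0"
    and "WB \<in> carrier_mat (s - n) (s - n)" and "det WB \<noteq> 0"
    and "Q \<in> carrier_mat s s" and "det Q \<noteq> 0"
  shows "generic_cps s n
    (four_block_mat WA (0\<^sub>m n (s - n)) (0\<^sub>m (s - n) n) WB * L
       * map_mat of_rat (the (mat_inverse Q)))"
proof -
  define k where "k = s - n"
  note G = assms(1)[unfolded generic_cps_def]
  have sk: "s = n + k" using G k_def by auto
  have WA: "WA \<in> carrier_mat n n" and WB: "WB \<in> carrier_mat k k"
    using assms k_def by auto
  have L: "L \<in> carrier_mat s s" using G by auto
  define D where "D = four_block_mat WA (0\<^sub>m n k) (0\<^sub>m k n) WB"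
  have D: "D \<in> carrier_mat s s" unfolding D_def sk using WA WB by simp
  obtain P where P: "mat_inverse Q = Some P" "Q * P = 1\<^sub>m s" "P * Q = 1\<^sub>m s" "P \<in> carrier_mat s s"
    using mat_inv_exists[OF assms(6,7)] by auto
  define Qi where "Qi = map_mat (of_rat :: rat \<Rightarrow> real) P"
  define Qr where "Qr = map_mat (of_rat :: rat \<Rightarrow> real) Q"
  have Qi: "Qi \<in> carrier_mat s s" and Qr: "Qr \<in> carrier_mat s s"
    using P assms(6) unfolding Qi_def Qr_def by auto
  have QiQr: "Qi * Qr = 1\<^sub>m s"
    unfolding Qi_def Qr_def using of_rat_hom.mat_hom_mult[OF P(4) assms(6)] P(3)
    by (metis of_rat_hom.mat_hom_one)
  have detQi: "det Qi \<noteq> 0"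
  proof -
    have "det Qi * det Qr = 1" using det_mult[OF Qi Qr] QiQr by simp
    thus ?thesis by auto
  qed
  define Lt where "Lt = L * Qi"
  have Lt: "Lt \<in> carrier_mat s s" unfolding Lt_def using L Qi by simp
  have eqM: "four_block_mat WA (0\<^sub>m n (s - n)) (0\<^sub>m (s - n) n) WB * L
       * map_mat of_rat (the (mat_inverse Q)) = D * Lt"
    unfolding D_def Lt_def Qi_def k_def P(1) using assoc_mult_mat[OF D[unfolded D_def k_def] L Qi[unfolded Qi_def]]
    by simp
  have detD: "det D \<noteq> 0" unfolding D_def
    using det_four_block_mat_lower_left_zero[OF WA zero_carrier_mat refl WB] assms(3,5) k_def by simp
  have detL': "det (D * Lt) \<noteq> 0"
    using det_mult[OF D Lt] det_mult[OF L Qi] detD detQi G unfolding Lt_def by simp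
  obtain N where N: "N > 0" "\<forall>i<s. \<forall>j<s. real_of_int N * Qi $$ (i,j) \<in> \<int>"
    using rat_mat_denom[of s P] P(4) unfolding Qi_def by auto
  obtain M where M: "M > 0" "\<forall>i<s. \<forall>j<s. real_of_int M * Qr $$ (i,j) \<in> \<int>"
    using rat_mat_denom[of s Q] assms(6) unfolding Qr_def by auto
  have latL: "lattice_of s L \<subseteq> carrier_vec s" unfolding lattice_of_def int_vecs_def
    using L mult_mat_vec_carrier by blast
  have latL': "lattice_of s (D * Lt) \<subseteq> carrier_vec s" unfolding lattice_of_def int_vecs_def
    using mult_carrier_mat[OF D Lt] mult_mat_vec_carrier by blast
  have LA: "\<exists>u\<in>lattice_of s L. x = D *\<^sub>v ((1 / real_of_int N) \<cdot>\<^sub>v u)"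
    if x: "x \<in> lattice_of s (D * Lt)" for x
  proof -
    obtain r where r: "r \<in> int_vecs s" "x = (D * Lt) *\<^sub>v r" using x unfolding lattice_of_def by auto
    have rc: "r \<in> carrier_vec s" using r unfolding int_vecs_def by auto
    define w where "w = (real_of_int N \<cdot>\<^sub>m Qi) *\<^sub>v r"
    have w: "w \<in> int_vecs s" unfolding w_def
      by (rule int_mat_int_vec[OF _ _ r(1)]) (use Qi N in auto)
    have wc: "w \<in> carrier_vec s" using w unfolding int_vecs_def by auto
    have "Qi *\<^sub>v r = (1 / real_of_int N) \<cdot>\<^sub>v w"
      unfolding w_def smult_mat_mult_vec'[OF Qi rc] smult_smult_assoc using N by simp
    hence "x = D *\<^sub>v (L *\<^sub>v ((1 / real_of_int N) \<cdot>\<^sub>v w))"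
      using r(2) assoc_mult_mat_vec[OF D Lt rc] assoc_mult_mat_vec[OF L Qi rc] unfolding Lt_def by simp
    also have "\<dots> = D *\<^sub>v ((1 / real_of_int N) \<cdot>\<^sub>v (L *\<^sub>v w))"
      using mult_mat_vec[OF L wc] by simp
    finally show ?thesis using w unfolding lattice_of_def by auto
  qed
  have LB: "D *\<^sub>v (real_of_int M \<cdot>\<^sub>v u) \<in> lattice_of s (D * Lt)"
    if u: "u \<in> lattice_of s L" for u
  proof -
    obtain r where r: "r \<in> int_vecs s" "u = L *\<^sub>v r" using u unfolding lattice_of_def by auto
    have rc: "r \<in> carrier_vec s" using r unfolding int_vecs_def by auto
    define w where "w = (real_of_int M \<cdot>\<^sub>m Qr) *\<^sub>v r"
    have w: "w \<in> int_vecs s" unfolding w_def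
      by (rule int_mat_int_vec[OF _ _ r(1)]) (use Qr M in auto)
    have "Qi *\<^sub>v w = real_of_int M \<cdot>\<^sub>v r"
      unfolding w_def smult_mat_mult_vec'[OF Qr rc]
      using mult_mat_vec[OF Qi, of "Qr *\<^sub>v r"] assoc_mult_mat_vec[OF Qi Qr rc] QiQr Qr rc by simp
    hence "(D * Lt) *\<^sub>v w = D *\<^sub>v (L *\<^sub>v (real_of_int M \<cdot>\<^sub>v r))"
      using w assoc_mult_mat_vec[OF D Lt] assoc_mult_mat_vec[OF L Qi] unfolding Lt_def int_vecs_def
      by simp
    also have "\<dots> = D *\<^sub>v (real_of_int M \<cdot>\<^sub>v u)" using mult_mat_vec[OF L rc] r by simp
    finally have "(D * Lt) *\<^sub>v w = D *\<^sub>v (real_of_int M \<cdot>\<^sub>v u)" .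
    thus ?thesis using w unfolding lattice_of_def by (auto intro!: exI[of _ w])
  qed
  have projD: "pi_par n (D *\<^sub>v x) = WA *\<^sub>v pi_par n x" "pi_perp s n (D *\<^sub>v x) = WB *\<^sub>v pi_perp s n x"
    if "x \<in> carrier_vec s" for x
    unfolding pi_par_def pi_perp_def D_def k_def[symmetric]
    using block_proj[OF WA WB, of x] that sk by auto
  have par_smult: "pi_par n (c \<cdot>\<^sub>v x) = c \<cdot>\<^sub>v pi_par n x" "pi_perp s n (c \<cdot>\<^sub>v x) = c \<cdot>\<^sub>v pi_perp s n x"
    if "x \<in> carrier_vec s" for x c
    unfolding pi_par_def pi_perp_def using that sk by (auto intro!: vec_first_smult vec_last_smult)
  have Nnz: "1 / real_of_int N \<noteq> 0" using N by simp
  have inj1: "inj_on (pi_par n) (lattice_of s (D * Lt))"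
  proof (rule inj_onI)
    fix x y assume x: "x \<in> lattice_of s (D * Lt)" and y: "y \<in> lattice_of s (D * Lt)"
      and e: "pi_par n x = pi_par n y"
    obtain u where u: "u \<in> lattice_of s L" "x = D *\<^sub>v ((1 / real_of_int N) \<cdot>\<^sub>v u)" using LA[OF x] by auto
    obtain v where v: "v \<in> lattice_of s L" "y = D *\<^sub>v ((1 / real_of_int N) \<cdot>\<^sub>v v)" using LA[OF y] by auto
    have uc: "u \<in> carrier_vec s" and vc: "v \<in> carrier_vec s" using u v latL by auto
    have "WA *\<^sub>v ((1 / real_of_int N) \<cdot>\<^sub>v pi_par n u) = WA *\<^sub>v ((1 / real_of_int N) \<cdot>\<^sub>v pi_par n v)"
      using e u(2) v(2) projD par_smult uc vc by simp
    note ee = this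
    have "(1 / real_of_int N) \<cdot>\<^sub>v pi_par n u = (1 / real_of_int N) \<cdot>\<^sub>v pi_par n v"
      using mat_left_cancel[OF WA assms(3) _ _ ee] by (simp add: pi_par_def)
    hence "pi_par n u = pi_par n v" by (rule smult_vec_cancel[OF Nnz])
    hence "u = v" using G u(1) v(1) by (auto dest: inj_onD)
    thus "x = y" using u v by simp
  qed
  have inj2: "inj_on (pi_perp s n) (lattice_of s (D * Lt))"
  proof (rule inj_onI)
    fix x y assume x: "x \<in> lattice_of s (D * Lt)" and y: "y \<in> lattice_of s (D * Lt)"
      and e: "pi_perp s n x = pi_perp s n y"
    obtain u where u: "u \<in> lattice_of s L" "x = D *\<^sub>v ((1 / real_of_int N) \<cdot>\<^sub>v u)" using LA[OF x] by auto
    obtain v where v: "v \<in> lattice_of s L" "y = D *\<^sub>v ((1 / real_of_int N) \<cdot>\<^sub>v v)" using LA[OF y] by auto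
    have uc: "u \<in> carrier_vec s" and vc: "v \<in> carrier_vec s" using u v latL by auto
    have "WB *\<^sub>v ((1 / real_of_int N) \<cdot>\<^sub>v pi_perp s n u) = WB *\<^sub>v ((1 / real_of_int N) \<cdot>\<^sub>v pi_perp s n v)"
      using e u(2) v(2) projD par_smult uc vc by simp
    note ee = this
    have "(1 / real_of_int N) \<cdot>\<^sub>v pi_perp s n u = (1 / real_of_int N) \<cdot>\<^sub>v pi_perp s n v"
      using mat_left_cancel[OF WB assms(5)[folded k_def] _ _ ee] by (simp add: pi_perp_def k_def)
    hence "pi_perp s n u = pi_perp s n v" by (rule smult_vec_cancel[OF Nnz])
    hence "u = v" using G u(1) v(1) by (auto dest: inj_onD)
    thus "x = y" using u v by simp
  qed
  have dense: "dense_in_Rm k (pi_perp s n ` lattice_of s (D * Lt))"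
  proof -
    define A where "A = real_of_int M \<cdot>\<^sub>m WB"
    have A: "A \<in> carrier_mat k k" unfolding A_def using WB by simp
    have detA: "det A \<noteq> 0" unfolding A_def using M assms(5) WB by simp
    have S: "dense_in_Rm k (pi_perp s n ` lattice_of s L)" using G k_def by simp
    have Sc: "pi_perp s n ` lattice_of s L \<subseteq> carrier_vec k"
      unfolding pi_perp_def k_def by auto
    have d: "dense_in_Rm k ((\<lambda>x. A *\<^sub>v x) ` (pi_perp s n ` lattice_of s L))"
      by (rule dense_image[OF A detA S Sc])
    have sub: "(\<lambda>x. A *\<^sub>v x) ` (pi_perp s n ` lattice_of s L) \<subseteq> pi_perp s n ` lattice_of s (D * Lt)"
    proof
      fix y assume "y \<in> (\<lambda>x. A *\<^sub>v x) ` (pi_perp s n ` lattice_of s L)"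
      then obtain u where u: "u \<in> lattice_of s L" "y = A *\<^sub>v pi_perp s n u" by auto
      have uc: "u \<in> carrier_vec s" using u latL by auto
      have pc: "pi_perp s n u \<in> carrier_vec k" unfolding pi_perp_def k_def by simp
      have "y = pi_perp s n (D *\<^sub>v (real_of_int M \<cdot>\<^sub>v u))"
        using u(2) projD par_smult uc smult_mat_mult_vec'[OF WB pc] mult_mat_vec[OF WB pc]
        unfolding A_def by simp
      thus "y \<in> pi_perp s n ` lattice_of s (D * Lt)" using LB[OF u(1)] by blast
    qed
    show ?thesis using d sub unfolding dense_in_Rm_def by blast
  qed
  show ?thesis unfolding eqM generic_cps_def
    using G D Lt detL' inj1 inj2 dense k_def by auto
qed

end
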